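(* Let $F\ge2$ and $K\ge1$ be integers, and write $K=\ell F+i$ with integers $\ell\ge0$ and $0\le i<F$. Then $$s(F,K,1)=\frac{\ell F(F-1)}{2}+\frac{i(i-1)}{2}+i(F-i).$$
   Context: A placement delivery array $S$-PDA$(F,K,Z)$ is an $F\times K$ array $R=(r_{j,k})$, $1\le j\le F$, $1\le k\le K$, over a finite set $S$ such that: (1) each cell is either empty or contains an element of $S$; (2) each column contains exactly $Z$ empty cells; (3) each element of $S$ occurs at most once in each row and at most once in each column; (4) if two distinct nonempty cells satisfy $r_{j_1,k_1}=r_{j_2,k_2}=t\in S$, then the cells $r_{j_1,k_2}$ and $r_{j_2,k_1}$ are empty. For integers $F,K\ge1$, $0\le Z\le F$, define $s(F,K,Z)=\min\{|S| : \text{there exists an } S\text{-PDA}(F,K,Z)\}$. *)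

theory Defs
  imports Complex_Main
begin

text \<open>An F x K array over S: rows 0..<F, columns 0..<K; a cell is None (empty) or Some t.\<close>

definition is_PDA :: "'a set \<Rightarrow> nat \<Rightarrow> nat \<Rightarrow> nat \<Rightarrow> (nat \<Rightarrow> nat \<Rightarrow> 'a option) \<Rightarrow> bool" where
  "is_PDA S F K Z R \<longleftrightarrow>
     finite S \<and>
     (\<forall>j<F. \<forall>k<K. \<forall>t. R j k = Some t \<longrightarrow> t \<in> S) \<and>
     (\<forall>k<K. card {j. j < F \<and> R j k = None} = Z) \<and>
     (\<forall>t\<in>S. \<forall>j<F. \<forall>k1<K. \<forall>k2<K. R j k1 = Some t \<and> R j k2 = Some t \<longrightarrow> k1 = k2) \<and>
     (\<forall>t\<in>S. \<forall>k<K. \<forall>j1<F. \<forall>j2<F. R j1 k = Some t \<and> R j2 k = Some t \<longrightarrow> j1 = j2) \<and>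
     (\<forall>j1<F. \<forall>j2<F. \<forall>k1<K. \<forall>k2<K. \<forall>t.
        (j1, k1) \<noteq> (j2, k2) \<and> R j1 k1 = Some t \<and> R j2 k2 = Some t
        \<longrightarrow> R j1 k2 = None \<and> R j2 k1 = None)"

text \<open>s(F,K,Z): minimal number of symbols; symbol sets are taken inside nat w.l.o.g.\<close>
definition s_PDA :: "nat \<Rightarrow> nat \<Rightarrow> nat \<Rightarrow> nat" where
  "s_PDA F K Z = (LEAST n. \<exists>(S::nat set) R. is_PDA S F K Z R \<and> card S = n)"

end

theory Submission
  imports Defs
begin


definition Tf :: "nat \<Rightarrow> nat \<Rightarrow> nat" where
  "Tf F K = (\<Sum>m<K. m mod F)"

lemma Tf_formula:
  assumes "F > 0"
  shows "2 * Tf F K = (K div F) * F * (F - 1) + (K mod F) * (K mod F - 1)"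
proof (induction K)
  case 0 then show ?case by (simp add: Tf_def)
next
  case (Suc K)
  have T: "Tf F (Suc K) = Tf F K + K mod F" by (simp add: Tf_def)
  have dm: "K = K mod F + (K div F) * F" by simp
  show ?case
  proof (cases "Suc (K mod F) = F")
    case True
    then have m: "Suc K mod F = 0" using assms by (simp add: mod_Suc)
    have eq: "Suc K = F + (K div F) * F" using True dm by linarith
    have d: "Suc K div F = Suc (K div F)"
    proof -
      have "Suc K div F = (F + (K div F) * F) div F" using eq by simp
      also have "\<dots> = K div F + F div F" using div_mult_self1[of F F "K div F"] assms by simp
      finally show ?thesis using assms by simp
    qed
    obtain r where r: "F = Suc r" using assms not0_implies_Suc by blast
    have km: "K mod F = r" using True r by simp
    have "2 * Tf F (Suc K) = 2 * Tf F K + 2 * r" using T km by simp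
    also have "\<dots> = (K div F) * F * r + r * (r - 1) + 2 * r" using Suc km r by simp
    also have "\<dots> = Suc (K div F) * F * r"
      using r by (cases r) (auto simp: algebra_simps)
    finally show ?thesis using m d r by simp
  next
    case False
    then have m: "Suc K mod F = Suc (K mod F)" using assms by (simp add: mod_Suc)
    have lt: "Suc (K mod F) < F" using False assms by (metis Suc_lessI mod_less_divisor)
    have eq: "Suc K = Suc (K mod F) + (K div F) * F" using dm by linarith
    have d: "Suc K div F = K div F"
    proof -
      have "Suc K div F = (Suc (K mod F) + (K div F) * F) div F" using eq by simp
      also have "\<dots> = K div F + Suc (K mod F) div F" using div_mult_self1[of F "Suc (K mod F)" "K div F"] assms by simp
      finally show ?thesis using lt by simp
    qed
    show ?thesis using Suc T m d
      by (cases "K mod F") (auto simp: algebra_simps)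
  qed
qed

lemma Tf_shift: "Tf F (K + n) = Tf F K + (\<Sum>m<n. (K + m) mod F)"
  by (induction n) (auto simp: Tf_def)

lemma sum_set_ge:
  fixes B :: "nat set"
  assumes "finite B"
  shows "(\<Sum>y<card B. y) \<le> \<Sum>B"
  using assms
proof (induction "card B" arbitrary: B)
  case 0 then show ?case by simp
next
  case (Suc n)
  then have ne: "B \<noteq> {}" by (metis card.empty nat.distinct(1))
  define M where "M = Max B"
  have MB: "M \<in> B" using Suc.prems ne M_def by simp
  have Mle: "\<forall>x\<in>B. x \<le> M" using Suc.prems M_def by simp
  have "B \<subseteq> {..M}" using Mle by auto
  then have "card B \<le> Suc M" using card_mono[of "{..M}" B] by simp
  then have nM: "n \<le> M" using Suc.hyps(2) by simp
  have c: "card (B - {M}) = n" using Suc.prems Suc.hyps(2) MB by simp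
  have IH: "(\<Sum>y<n. y) \<le> \<Sum>(B - {M})" using Suc.hyps(1)[of "B - {M}"] c Suc.prems by simp
  have "\<Sum>B = M + \<Sum>(B - {M})" using Suc.prems MB by (simp add: sum.remove)
  moreover have "card B = Suc n" using Suc.hyps(2) by simp
  ultimately show ?case using IH nM by simp
qed

lemma consec_mod_ge:
  fixes n F K :: nat
  assumes "n \<le> F"
  shows "(\<Sum>y<n. y) \<le> (\<Sum>m<n. (K + m) mod F)"
proof -
  have inj: "inj_on (\<lambda>m. (K + m) mod F) {..<n}"
  proof (rule inj_onI)
    fix x y assume x: "x \<in> {..<n}" and y: "y \<in> {..<n}" and e: "(K + x) mod F = (K + y) mod F"
    show "x = y"
    proof (rule ccontr)
      assume "x \<noteq> y"
      show False
      proof (cases "x < y")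
        case True
        note 1 = True
        then have "F dvd (K + y) - (K + x)" using e mod_eq_dvd_iff_nat[of "K+x" "K+y" F] by simp
        then have "F dvd y - x" by simp
        moreover have "0 < y - x" "y - x < F" using 1 y assms by auto
        ultimately show False using nat_dvd_not_less by blast
      next
        case False
        then have 2: "y < x" using \<open>x \<noteq> y\<close> by linarith
        then have "F dvd (K + x) - (K + y)" using e mod_eq_dvd_iff_nat[of "K+y" "K+x" F] by simp
        then have "F dvd x - y" by simp
        moreover have "0 < x - y" "x - y < F" using 2 x assms by auto
        ultimately show False using nat_dvd_not_less by blast
      qed
    qed
  qed
  have "(\<Sum>m<n. (K + m) mod F) = \<Sum>((\<lambda>m. (K + m) mod F) ` {..<n})"
    using sum.reindex[OF inj, of id] by simp
  moreover have "card ((\<lambda>m. (K + m) mod F) ` {..<n}) = n" using card_image[OF inj] by simp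
  ultimately show ?thesis using sum_set_ge[of "(\<lambda>m. (K + m) mod F) ` {..<n}"] by simp
qed

definition pairs_in :: "nat set \<Rightarrow> (nat \<times> nat) set" where
  "pairs_in A = {(x, y). x \<in> A \<and> y \<in> A \<and> x < y}"

lemma card_pairs_in:
  assumes "finite A"
  shows "card (pairs_in A) = (\<Sum>y<card A. y)"
  using assms
proof (induction "card A" arbitrary: A)
  case 0 then show ?case by (simp add: pairs_in_def)
next
  case (Suc n)
  then have ne: "A \<noteq> {}" by (metis card.empty nat.distinct(1))
  define M where "M = Max A"
  have MA: "M \<in> A" using Suc.prems ne M_def by simp
  have Mle: "\<forall>x\<in>A. x \<le> M" using Suc.prems M_def by simp
  have c: "card (A - {M}) = n" using Suc.prems Suc.hyps(2) MA by simp
  have IH: "card (pairs_in (A - {M})) = (\<Sum>y<n. y)" using Suc.hyps(1)[of "A - {M}"] c Suc.prems by simp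
  have split: "pairs_in A = pairs_in (A - {M}) \<union> (\<lambda>x. (x, M)) ` (A - {M})"
    using Mle MA unfolding pairs_in_def by fastforce
  have disj: "pairs_in (A - {M}) \<inter> (\<lambda>x. (x, M)) ` (A - {M}) = {}"
    unfolding pairs_in_def by auto
  have fin1: "finite (pairs_in (A - {M}))"
    by (rule finite_subset[of _ "(A - {M}) \<times> (A - {M})"]) (use Suc.prems in \<open>auto simp: pairs_in_def\<close>)
  have "card ((\<lambda>x. (x, M)) ` (A - {M})) = n" using c by (simp add: card_image inj_on_def)
  then have "card (pairs_in A) = card (pairs_in (A - {M})) + n"
  proof -
    have "finite ((\<lambda>x. (x, M)) ` (A - {M}))" using Suc.prems by simp
    then show ?thesis using split disj fin1 card_Un_disjoint \<open>card ((\<lambda>x. (x, M)) ` (A - {M})) = n\<close> by metis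
  qed
  moreover have "card A = Suc n" using Suc.hyps(2) by simp
  ultimately show ?case using IH by simp
qed

definition Pairs :: "nat \<Rightarrow> (nat \<times> nat) set" where
  "Pairs F = {(j, j'). j < j' \<and> j' < F}"

lemma finite_Pairs: "finite (Pairs F)"
  by (rule finite_subset[of _ "{..<F} \<times> {..<F}"]) (auto simp: Pairs_def)

lemma Q_le_Tf:
  fixes a :: "nat \<Rightarrow> nat"
  shows "(\<Sum>(j, j')\<in>Pairs F. min (a j) (a j')) \<le> Tf F (\<Sum>j<F. a j)"
proof (induction "\<Sum>j<F. a j" arbitrary: a rule: less_induct)
  case less
  define A where "A = {j. j < F \<and> 0 < a j}"
  show ?case
  proof (cases "A = {}")
    case True
    then have "\<forall>(j, j')\<in>Pairs F. min (a j) (a j') = 0" by (auto simp: A_def Pairs_def)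
    then have "(\<Sum>(j, j')\<in>Pairs F. min (a j) (a j')) = 0" by (auto intro: sum.neutral)
    then show ?thesis by simp
  next
    case False
    define a' where "a' = (\<lambda>j. a j - 1)"
    define n where "n = card A"
    have finA: "finite A" by (simp add: A_def)
    have n1: "n \<ge> 1" using False finA n_def by (simp add: Suc_leI card_gt_0_iff)
    have nF: "n \<le> F" unfolding n_def A_def using card_mono[of "{..<F}" "{j. j < F \<and> 0 < a j}"] by auto
    have sa: "(\<Sum>j<F. a j) = (\<Sum>j<F. a' j) + (\<Sum>j<F. if 0 < a j then 1 else 0)"
      unfolding a'_def by (subst sum.distrib[symmetric]) (rule sum.cong, auto)
    have "(\<Sum>j<F. (if 0 < a j then 1 else 0)::nat) = card A"
      unfolding A_def by (simp add: sum.If_cases Int_def)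
    then have sa2: "(\<Sum>j<F. a j) = (\<Sum>j<F. a' j) + n" using sa n_def by simp
    have lt: "(\<Sum>j<F. a' j) < (\<Sum>j<F. a j)" using sa2 n1 by simp
    have IH: "(\<Sum>(j, j')\<in>Pairs F. min (a' j) (a' j')) \<le> Tf F (\<Sum>j<F. a' j)"
      using less[OF lt] .
    have mins: "\<And>j j'. min (a j) (a j') = min (a' j) (a' j') + (if 0 < a j \<and> 0 < a j' then 1 else 0)"
      unfolding a'_def by auto
    have "(\<Sum>(j, j')\<in>Pairs F. min (a j) (a j'))
        = (\<Sum>(j, j')\<in>Pairs F. min (a' j) (a' j')) + (\<Sum>(j, j')\<in>Pairs F. (if 0 < a j \<and> 0 < a j' then 1 else 0))"
      by (subst sum.distrib[symmetric]) (rule sum.cong, auto simp: mins)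
    moreover have "(\<Sum>(j, j')\<in>Pairs F. (if 0 < a j \<and> 0 < a j' then 1 else 0)::nat) = card (pairs_in A)"
    proof -
      have "(\<Sum>(j, j')\<in>Pairs F. (if 0 < a j \<and> 0 < a j' then 1 else 0)::nat)
          = (\<Sum>p\<in>Pairs F. (if p \<in> pairs_in A then 1 else 0))"
        by (rule sum.cong) (auto simp: Pairs_def pairs_in_def A_def split: if_splits)
      also have "\<dots> = card (Pairs F \<inter> pairs_in A)"
        using finite_Pairs by (simp add: sum.If_cases)
      also have "Pairs F \<inter> pairs_in A = pairs_in A" by (auto simp: Pairs_def pairs_in_def A_def)
      finally show ?thesis .
    qed
    moreover have "card (pairs_in A) = (\<Sum>y<n. y)" using card_pairs_in[OF finA] n_def by simp
    moreover have "Tf F (\<Sum>j<F. a j) = Tf F (\<Sum>j<F. a' j) + (\<Sum>m<n. ((\<Sum>j<F. a' j) + m) mod F)"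
      using sa2 Tf_shift by simp
    moreover have "(\<Sum>y<n. y) \<le> (\<Sum>m<n. ((\<Sum>j<F. a' j) + m) mod F)" using consec_mod_ge[OF nF] .
    ultimately show ?thesis using IH by linarith
  qed
qed




lemma pdaD:
  assumes "is_PDA S F K Z R"
  shows "finite S"
    "\<forall>j<F. \<forall>k<K. \<forall>t. R j k = Some t \<longrightarrow> t \<in> S"
    "\<forall>k<K. card {j. j < F \<and> R j k = None} = Z"
    "\<forall>j1<F. \<forall>j2<F. \<forall>k1<K. \<forall>k2<K. \<forall>t.
        (j1, k1) \<noteq> (j2, k2) \<and> R j1 k1 = Some t \<and> R j2 k2 = Some t
        \<longrightarrow> R j1 k2 = None \<and> R j2 k1 = None"
  using assms unfolding is_PDA_def apply -
  apply (elim conjE, assumption)+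
  done

context
  fixes S :: "nat set" and F K :: nat and R :: "nat \<Rightarrow> nat \<Rightarrow> nat option"
  assumes pda: "is_PDA S F K 1 R"
begin

definition ee :: "nat \<Rightarrow> nat" where "ee k = (THE j. j < F \<and> R j k = None)"

lemma ee_props:
  assumes "k < K"
  shows "ee k < F" "R (ee k) k = None" "\<And>j. j < F \<Longrightarrow> R j k = None \<Longrightarrow> j = ee k"
proof -
  have "card {j. j < F \<and> R j k = None} = Suc 0" using pdaD(3)[OF pda] assms by simp
  then obtain j0 where j0: "{j. j < F \<and> R j k = None} = {j0}" by (auto simp: card_1_singleton_iff)
  then have h: "j0 < F" "R j0 k = None" by auto
  have u: "\<And>j. j < F \<Longrightarrow> R j k = None \<Longrightarrow> j = j0" using j0 by auto
  have e: "ee k = j0" unfolding ee_def using h u by (intro the_equality) blast+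
  show "ee k < F" "R (ee k) k = None" using h e by simp_all
  show "\<And>j. j < F \<Longrightarrow> R j k = None \<Longrightarrow> j = ee k" using u e by blast
qed

lemma ee_iff: "k < K \<Longrightarrow> j < F \<Longrightarrow> (R j k = None) = (j = ee k)"
  using ee_props(2)[of k] ee_props(3)[of k j] by metis

lemma cond6:
  assumes "j1 < F" "j2 < F" "k1 < K" "k2 < K" "(j1, k1) \<noteq> (j2, k2)" "R j1 k1 = Some t" "R j2 k2 = Some t"
  shows "R j1 k2 = None \<and> R j2 k1 = None"
proof -
  have "\<forall>j1<F. \<forall>j2<F. \<forall>k1<K. \<forall>k2<K. \<forall>t.
        (j1, k1) \<noteq> (j2, k2) \<and> R j1 k1 = Some t \<and> R j2 k2 = Some t
        \<longrightarrow> R j1 k2 = None \<and> R j2 k1 = None" using pdaD(4)[OF pda] .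
  from this[rule_format, OF assms(1-4)] show ?thesis using assms(5-7) by blast
qed

lemma inS: "j < F \<Longrightarrow> k < K \<Longrightarrow> R j k = Some t \<Longrightarrow> t \<in> S"
  using pdaD(2)[OF pda] by blast

lemma finS: "finite S" using pdaD(1)[OF pda] .

definition CC :: "(nat \<times> nat) set" where "CC = {(k, j). k < K \<and> j < F \<and> R j k \<noteq> None}"

definition vv :: "nat \<times> nat \<Rightarrow> nat option" where "vv c = R (snd c) (fst c)"

lemma P1:
  assumes "c \<in> CC" "d \<in> CC" "c \<noteq> d" "vv c = vv d"
  shows "snd c = ee (fst d) \<and> snd d = ee (fst c) \<and> fst c \<noteq> fst d \<and> snd c \<noteq> snd d"
proof -
  obtain k1 j1 where c: "c = (k1, j1)" by (cases c)
  obtain k2 j2 where d: "d = (k2, j2)" by (cases d)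
  have h: "k1 < K" "j1 < F" "R j1 k1 \<noteq> None" "k2 < K" "j2 < F" "R j2 k2 \<noteq> None"
    using assms c d by (auto simp: CC_def)
  obtain t where t: "R j1 k1 = Some t" using h by auto
  have t2: "R j2 k2 = Some t" using t assms c d by (simp add: vv_def)
  have ne: "(j1, k1) \<noteq> (j2, k2)" using assms c d by auto
  have n: "R j1 k2 = None" "R j2 k1 = None" using cond6[OF h(2) h(5) h(1) h(4) ne t t2] by auto
  have a1: "j1 = ee k2" using ee_props(3)[OF h(4) h(2) n(1)] .
  have a2: "j2 = ee k1" using ee_props(3)[OF h(1) h(5) n(2)] .
  have "k1 \<noteq> k2" proof assume "k1 = k2" then show False using n(1) t by simp qed
  moreover have "j1 \<noteq> j2" proof assume "j1 = j2" then show False using n(1) t2 by simp qed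
  ultimately show ?thesis using a1 a2 c d by simp
qed

lemma P2:
  assumes "c \<in> CC" "d \<in> CC" "f \<in> CC" "vv c = vv d" "vv d = vv f"
  shows "c = d \<or> c = f \<or> d = f"
proof (rule ccontr)
  assume "\<not> ?thesis"
  then have ne: "c \<noteq> d" "c \<noteq> f" "d \<noteq> f" by auto
  have vcf: "vv c = vv f" using assms(4,5) by simp
  have 1: "snd d = ee (fst c)" using P1[OF assms(1,2) ne(1) assms(4)] by blast
  have 2: "snd f = ee (fst c)" using P1[OF assms(1,3) ne(2) vcf] by blast
  have 3: "snd d \<noteq> snd f" using P1[OF assms(2,3) ne(3) assms(5)] by blast
  show False using 1 2 3 by simp
qed

lemma finCC: "finite CC"
  by (rule finite_subset[of _ "{..<K} \<times> {..<F}"]) (auto simp: CC_def)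

lemma cardCC: "card CC = K * (F - 1)"
proof -
  have "CC = Sigma {..<K} (\<lambda>k. {..<F} - {ee k})"
  proof (rule set_eqI)
    fix p :: "nat \<times> nat"
    obtain k j where p: "p = (k, j)" by (cases p)
    show "p \<in> CC \<longleftrightarrow> p \<in> Sigma {..<K} (\<lambda>k. {..<F} - {ee k})"
    proof (cases "k < K \<and> j < F")
      case True then show ?thesis using ee_iff[of k j] p by (cases "R j k") (simp_all add: CC_def)
    next
      case False then show ?thesis using p by (auto simp: CC_def)
    qed
  qed
  then have "card CC = (\<Sum>k<K. card ({..<F} - {ee k}))" by (simp add: card_SigmaI)
  also have "\<dots> = (\<Sum>k<K. F - 1)" by (rule sum.cong) (simp_all add: ee_props(1))
  finally show ?thesis by simp
qed

definition PP :: "((nat \<times> nat) \<times> (nat \<times> nat)) set" where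
  "PP = {(c, d). c \<in> CC \<and> d \<in> CC \<and> fst c < fst d \<and> vv c = vv d}"

lemma finPP: "finite PP"
  by (rule finite_subset[of _ "CC \<times> CC"]) (auto simp: PP_def finCC)

lemma card_S_ge: "card CC - card PP \<le> card S"
proof -
  define P where "P = snd ` PP"
  have injP: "inj_on snd PP"
  proof (rule inj_onI)
    fix p q assume p: "p \<in> PP" and q: "q \<in> PP" and e: "snd p = snd q"
    obtain c d where pd: "p = (c, d)" by (cases p)
    obtain c' d' where qd: "q = (c', d')" by (cases q)
    have h: "c \<in> CC" "d \<in> CC" "c' \<in> CC" "fst c < fst d" "fst c' < fst d'" "vv c = vv d" "vv c' = vv d'" "d = d'"
      using p q e pd qd by (auto simp: PP_def)
    have "c = d \<or> c = c' \<or> d = c'" using P2[of c d c'] h by auto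
    then show "p = q" using h pd qd by auto
  qed
  have cardP: "card P = card PP" unfolding P_def using card_image[OF injP] .
  have PC: "P \<subseteq> CC" unfolding P_def PP_def by auto
  have injv: "inj_on vv (CC - P)"
  proof (rule inj_onI)
    fix c d assume c: "c \<in> CC - P" and d: "d \<in> CC - P" and e: "vv c = vv d"
    show "c = d"
    proof (rule ccontr)
      assume ne: "c \<noteq> d"
      then have "fst c \<noteq> fst d" using P1[of c d] c d e by auto
      then consider "fst c < fst d" | "fst d < fst c" by linarith
      then show False
      proof cases
        case 1 then have "(c, d) \<in> PP" using c d e by (auto simp: PP_def)
        then have "d \<in> P" unfolding P_def by force
        then show False using d by auto
      next
        case 2 then have "(d, c) \<in> PP" using c d e by (auto simp: PP_def)
        then have "c \<in> P" unfolding P_def by force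
        then show False using c by auto
      qed
    qed
  qed
  have img: "vv ` (CC - P) \<subseteq> Some ` S"
  proof
    fix x assume "x \<in> vv ` (CC - P)"
    then obtain c where c: "c \<in> CC" "x = vv c" by auto
    then obtain k j where "c = (k, j)" "k < K" "j < F" "R j k \<noteq> None" by (auto simp: CC_def)
    then obtain t where "R j k = Some t" "x = Some t" using c by (auto simp: vv_def)
    then show "x \<in> Some ` S" using inS \<open>k < K\<close> \<open>j < F\<close> by auto
  qed
  have "card (CC - P) \<le> card (Some ` S)"
    using card_inj_on_le[OF injv img] finS by simp
  also have "\<dots> = card S" by (simp add: card_image)
  finally have "card (CC - P) \<le> card S" .
  moreover have "card (CC - P) = card CC - card P"
    using PC finCC by (simp add: card_Diff_subset finite_subset)
  ultimately show ?thesis using cardP by simp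
qed

definition gg :: "(nat \<times> nat) \<times> (nat \<times> nat) \<Rightarrow> nat \<times> nat" where
  "gg p = (min (ee (fst (fst p))) (ee (fst (snd p))), max (ee (fst (fst p))) (ee (fst (snd p))))"

lemma PP_facts:
  assumes "(c, d) \<in> PP"
  shows "c \<in> CC" "d \<in> CC" "fst c < fst d" "vv c = vv d" "snd c = ee (fst d)" "snd d = ee (fst c)"
    "ee (fst c) \<noteq> ee (fst d)" "ee (fst c) < F" "ee (fst d) < F"
proof -
  show h: "c \<in> CC" "d \<in> CC" "fst c < fst d" "vv c = vv d" using assms by (auto simp: PP_def)
  then have "c \<noteq> d" by auto
  then show "snd c = ee (fst d)" "snd d = ee (fst c)" "ee (fst c) \<noteq> ee (fst d)"
    using P1[of c d] h by auto
  show "ee (fst c) < F" "ee (fst d) < F" using h ee_props(1) by (auto simp: CC_def)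
qed

lemma gg_Pairs: "p \<in> PP \<Longrightarrow> gg p \<in> Pairs F"
  using PP_facts[of "fst p" "snd p"] by (auto simp: gg_def Pairs_def)

lemma grp_bound:
  assumes "x = j \<or> x = j'" "j < j'"
  shows "card {p \<in> PP. gg p = (j, j')} \<le> card {k \<in> {..<K}. ee k = x}"
proof -
  define f :: "(nat \<times> nat) \<times> (nat \<times> nat) \<Rightarrow> nat" where "f p = (if ee (fst (fst p)) = x then fst (fst p) else fst (snd p))" for p
  have key: "\<And>c d. (c, d) \<in> PP \<Longrightarrow> gg (c, d) = (j, j') \<Longrightarrow>
      \<exists>z. (z = c \<or> z = d) \<and> fst z = f (c, d) \<and> ee (fst z) = x \<and> fst z < K \<and> snd z \<noteq> x \<and> (snd z = j \<or> snd z = j')"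
  proof -
    fix c d assume p: "(c, d) \<in> PP" and g: "gg (c, d) = (j, j')"
    note F = PP_facts[OF p]
    have ej: "(ee (fst c) = j \<and> ee (fst d) = j') \<or> (ee (fst c) = j' \<and> ee (fst d) = j)"
      using g F(7) unfolding gg_def by (auto simp: min_def max_def split: if_splits)
    define z where "z = (if ee (fst c) = x then c else d)"
    have zz: "z = c \<or> z = d" "fst z = f (c, d)" "ee (fst z) = x" using ej assms(1) assms(2)
      by (auto simp: z_def f_def)
    have zC: "z \<in> CC" using zz F by auto
    then have zK: "fst z < K" "snd z < F" "R (snd z) (fst z) \<noteq> None" by (auto simp: CC_def)
    have r1: "snd z \<noteq> x" using zK ee_props(2)[OF zK(1)] zz(3) by auto
    have r2: "snd z = j \<or> snd z = j'" using zz(1) F(5,6) ej by auto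
    show "\<exists>z. (z = c \<or> z = d) \<and> fst z = f (c, d) \<and> ee (fst z) = x \<and> fst z < K \<and> snd z \<noteq> x \<and> (snd z = j \<or> snd z = j')"
      by (rule exI[of _ z]) (use zz zK r1 r2 in blast)
  qed
  have inj: "inj_on f {p \<in> PP. gg p = (j, j')}"
  proof (rule inj_onI)
    fix p q assume p: "p \<in> {p \<in> PP. gg p = (j, j')}" and q: "q \<in> {p \<in> PP. gg p = (j, j')}" and e: "f p = f q"
    obtain c d where pd: "p = (c, d)" by (cases p)
    obtain c' d' where qd: "q = (c', d')" by (cases q)
    have k1: "(c, d) \<in> PP" "gg (c, d) = (j, j')" using p pd by auto
    obtain z where z: "(z = c \<or> z = d)" "fst z = f (c, d)" "snd z \<noteq> x" "snd z = j \<or> snd z = j'"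
      using key[OF k1] by blast
    have k2: "(c', d') \<in> PP" "gg (c', d') = (j, j')" using q qd by auto
    obtain z' where z': "(z' = c' \<or> z' = d')" "fst z' = f (c', d')" "snd z' \<noteq> x" "snd z' = j' \<or> snd z' = j"
      using key[OF k2] by blast
    have "snd z = snd z'" using z(3,4) z'(3,4) assms by auto
    moreover have "fst z = fst z'" using z(2) z'(2) e pd qd by simp
    ultimately have zeq: "z = z'" by (simp add: prod_eq_iff)
    note A = PP_facts[of c d] and B = PP_facts[of c' d']
    have pp: "(c, d) \<in> PP" "(c', d') \<in> PP" using p q pd qd by auto
    have vals: "vv c = vv d" "vv c' = vv d'" "vv z = vv c" "vv z' = vv c'"
      using A(4)[OF pp(1)] B(4)[OF pp(2)] z(1) z'(1) by auto
    have cc: "c \<in> CC" "d \<in> CC" "c' \<in> CC" "d' \<in> CC" using A(1,2)[OF pp(1)] B(1,2)[OF pp(2)] by auto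
    have lt: "fst c < fst d" "fst c' < fst d'" using A(3)[OF pp(1)] B(3)[OF pp(2)] by auto
    have "c' = c \<or> c' = d" using P2[of c d c'] cc vals zeq lt by auto
    moreover have "d' = c \<or> d' = d" using P2[of c d d'] cc vals zeq lt by auto
    ultimately show "p = q" using lt pd qd by auto
  qed
  have img: "f ` {p \<in> PP. gg p = (j, j')} \<subseteq> {k \<in> {..<K}. ee k = x}"
  proof
    fix k assume "k \<in> f ` {p \<in> PP. gg p = (j, j')}"
    then obtain p where p: "p \<in> PP" "gg p = (j, j')" "k = f p" by auto
    obtain c d where pd: "p = (c, d)" by (cases p)
    have kk: "(c, d) \<in> PP" "gg (c, d) = (j, j')" using p pd by auto
    have "f (c, d) < K \<and> ee (f (c, d)) = x" using key[OF kk] by metis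
    then show "k \<in> {k \<in> {..<K}. ee k = x}" using p pd by simp
  qed
  show ?thesis using card_inj_on_le[OF inj img] by simp
qed

lemma card_PP_le: "card PP \<le> Tf F K"
proof -
  define a where "a j = card {k \<in> {..<K}. ee k = j}" for j
  have "card PP = (\<Sum>q\<in>Pairs F. card {p \<in> PP. gg p = q})"
  proof -
    have "(\<Sum>q\<in>Pairs F. \<Sum>p\<in>{p \<in> PP. gg p = q}. (1::nat)) = (\<Sum>p\<in>PP. 1)"
      by (rule sum.group[OF finPP finite_Pairs]) (use gg_Pairs in auto)
    then show ?thesis by simp
  qed
  also have "\<dots> \<le> (\<Sum>(j, j')\<in>Pairs F. min (a j) (a j'))"
  proof (rule sum_mono)
    fix q assume "q \<in> Pairs F"
    then obtain j j' where q: "q = (j, j')" "j < j'" by (auto simp: Pairs_def)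
    show "card {p \<in> PP. gg p = q} \<le> (case q of (j, j') \<Rightarrow> min (a j) (a j'))"
      using grp_bound[of j j j'] grp_bound[of j' j j'] q by (simp add: a_def)
  qed
  also have "\<dots> \<le> Tf F (\<Sum>j<F. a j)" by (rule Q_le_Tf)
  also have "(\<Sum>j<F. a j) = K"
  proof -
    have "(\<Sum>j<F. \<Sum>k\<in>{k \<in> {..<K}. ee k = j}. (1::nat)) = (\<Sum>k<K. 1)"
      by (rule sum.group[of "{..<K}" "{..<F}" ee]) (auto simp: ee_props(1))
    then show ?thesis unfolding a_def by simp
  qed
  finally show ?thesis .
qed

lemma lower: "K * (F - 1) - Tf F K \<le> card S"
  using card_S_ge cardCC card_PP_le by linarith

end




definition cn :: "nat \<Rightarrow> nat \<Rightarrow> nat \<Rightarrow> nat \<times> nat" where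
  "cn F j k = (if k mod F < j then (j, k) else (k mod F, (k div F) * F + j))"

definition Rc :: "nat \<Rightarrow> nat \<Rightarrow> nat \<Rightarrow> nat \<Rightarrow> nat option" where
  "Rc F K j k = (if j < F \<and> k < K \<and> j \<noteq> k mod F then Some (fst (cn F j k) + F * snd (cn F j k)) else None)"

definition Sc :: "nat \<Rightarrow> nat \<Rightarrow> nat set" where
  "Sc F K = (\<lambda>(k, j). j + F * k) ` (SIGMA k:{..<K}. {k mod F<..<F})"

lemma enc_inj:
  fixes a a' b b' F :: nat
  assumes "a < F" "a' < F" "a + F * b = a' + F * b'"
  shows "a = a' \<and> b = b'"
proof -
  have A: "a = a'"
  proof -
    have "a = (a + F * b) mod F" using assms(1) by simp
    also have "\<dots> = (a' + F * b') mod F" by (simp only: assms(3))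
    also have "\<dots> = a'" using assms(2) by simp
    finally show ?thesis .
  qed
  have B: "b = b'"
  proof -
    have "b = (a + F * b) div F" using assms(1) by simp
    also have "\<dots> = (a' + F * b') div F" by (simp only: assms(3))
    also have "\<dots> = b'" using assms(2) by simp
    finally show ?thesis .
  qed
  show ?thesis using A B by simp
qed

lemma qmod: "j < (F::nat) \<Longrightarrow> (q * F + j) mod F = j" by simp
lemma qdiv: "j < (F::nat) \<Longrightarrow> (q * F + j) div F = q" by simp

lemma fst_cn_lt: "j < F \<Longrightarrow> fst (cn F j k) < F"
  unfolding cn_def by auto

lemma Rc_cond6:
  assumes F0: "0 < F" and h: "j1 < F" "j2 < F" "k1 < K" "k2 < K" "(j1, k1) \<noteq> (j2, k2)"
    "Rc F K j1 k1 = Some t" "Rc F K j2 k2 = Some t"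
  shows "Rc F K j1 k2 = None \<and> Rc F K j2 k1 = None"
proof -
  have n1: "j1 \<noteq> k1 mod F" and n2: "j2 \<noteq> k2 mod F"
    using h by (auto simp: Rc_def split: if_splits)
  have "fst (cn F j1 k1) + F * snd (cn F j1 k1) = fst (cn F j2 k2) + F * snd (cn F j2 k2)"
    using h n1 n2 by (auto simp: Rc_def)
  then have ceq: "cn F j1 k1 = cn F j2 k2"
    using enc_inj[OF fst_cn_lt[OF h(1)] fst_cn_lt[OF h(2)]] by (simp add: prod_eq_iff)
  have dm1: "k1 = (k1 div F) * F + k1 mod F" and dm2: "k2 = (k2 div F) * F + k2 mod F" by simp_all
  show ?thesis
  proof (cases "k1 mod F < j1")
    case c1: True
    show ?thesis
    proof (cases "k2 mod F < j2")
      case True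
      then show ?thesis using c1 ceq h(5) by (simp add: cn_def)
    next
      case False
      then have e: "j1 = k2 mod F" "k1 = (k2 div F) * F + j2" using c1 ceq by (simp_all add: cn_def)
      then have "k1 mod F = j2" using qmod[OF h(2)] by simp
      then show ?thesis using e by (simp add: Rc_def)
    qed
  next
    case c1: False
    show ?thesis
    proof (cases "k2 mod F < j2")
      case True
      then have e: "j2 = k1 mod F" "k2 = (k1 div F) * F + j1" using c1 ceq by (simp_all add: cn_def)
      then have "k2 mod F = j1" using qmod[OF h(1)] by simp
      then show ?thesis using e by (simp add: Rc_def)
    next
      case False
      then have e: "k1 mod F = k2 mod F" "(k1 div F) * F + j1 = (k2 div F) * F + j2"
        using c1 ceq by (simp_all add: cn_def)
      then have "j1 = j2" using qmod[OF h(1), of "k1 div F"] qmod[OF h(2), of "k2 div F"] by metis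
      moreover have "k1 div F = k2 div F" using e qdiv[OF h(1), of "k1 div F"] qdiv[OF h(2), of "k2 div F"] by metis
      ultimately have "k1 = k2" using e(1) dm1 dm2 by metis
      then show ?thesis using \<open>j1 = j2\<close> h(5) by simp
    qed
  qed
qed

lemma Rc_inS:
  assumes F0: "0 < F" and h: "j < F" "k < K" "Rc F K j k = Some t"
  shows "t \<in> Sc F K"
proof -
  have n: "j \<noteq> k mod F" and tt: "t = fst (cn F j k) + F * snd (cn F j k)"
    using h by (auto simp: Rc_def split: if_splits)
  show ?thesis
  proof (cases "k mod F < j")
    case True
    then have "t = j + F * k" using tt by (simp add: cn_def)
    moreover have "(k, j) \<in> (SIGMA k:{..<K}. {k mod F<..<F})" using True h by simp
    ultimately show ?thesis unfolding Sc_def by force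
  next
    case False
    then have lt: "j < k mod F" using n by simp
    define k' where "k' = (k div F) * F + j"
    have t: "t = k mod F + F * k'" using tt False by (simp add: cn_def k'_def)
    have "k' < (k div F) * F + k mod F" unfolding k'_def using lt by linarith
    also have "\<dots> = k" by simp
    finally have k'K: "k' < K" using h by simp
    have "k' mod F = j" using qmod[OF h(1)] k'_def by simp
    then have "(k', k mod F) \<in> (SIGMA k:{..<K}. {k mod F<..<F})" using k'K lt F0 by simp
    then show ?thesis unfolding Sc_def using t by force
  qed
qed

lemma Rc_col:
  assumes F0: "0 < F" and k: "k < K"
  shows "{j. j < F \<and> Rc F K j k = None} = {k mod F}"
  using assms by (auto simp: Rc_def)

lemma Rc_PDA:
  assumes F0: "0 < F"
  shows "is_PDA (Sc F K) F K 1 (Rc F K)"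
  unfolding is_PDA_def
proof (intro conjI)
  show "finite (Sc F K)" unfolding Sc_def by simp
  show "\<forall>j<F. \<forall>k<K. \<forall>t. Rc F K j k = Some t \<longrightarrow> t \<in> Sc F K"
    using Rc_inS[OF F0] by blast
  show "\<forall>k<K. card {j. j < F \<and> Rc F K j k = None} = 1"
    using Rc_col[OF F0] by simp
  show "\<forall>t\<in>Sc F K. \<forall>j<F. \<forall>k1<K. \<forall>k2<K. Rc F K j k1 = Some t \<and> Rc F K j k2 = Some t \<longrightarrow> k1 = k2"
  proof (intro ballI allI impI, elim conjE)
    fix t j k1 k2 assume a: "j < F" "k1 < K" "k2 < K" "Rc F K j k1 = Some t" "Rc F K j k2 = Some t"
    show "k1 = k2"
    proof (rule ccontr)
      assume "k1 \<noteq> k2"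
      then have "(j, k1) \<noteq> (j, k2)" by simp
      then show False using Rc_cond6[OF F0 a(1) a(1) a(2) a(3) _ a(4) a(5)] a(5) by simp
    qed
  qed
  show "\<forall>t\<in>Sc F K. \<forall>k<K. \<forall>j1<F. \<forall>j2<F. Rc F K j1 k = Some t \<and> Rc F K j2 k = Some t \<longrightarrow> j1 = j2"
  proof (intro ballI allI impI, elim conjE)
    fix t k j1 j2 assume a: "k < K" "j1 < F" "j2 < F" "Rc F K j1 k = Some t" "Rc F K j2 k = Some t"
    show "j1 = j2"
    proof (rule ccontr)
      assume "j1 \<noteq> j2"
      then have "(j1, k) \<noteq> (j2, k)" by simp
      then show False using Rc_cond6[OF F0 a(2) a(3) a(1) a(1) _ a(4) a(5)] a(5) by simp
    qed
  qed
  show "\<forall>j1<F. \<forall>j2<F. \<forall>k1<K. \<forall>k2<K. \<forall>t.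
        (j1, k1) \<noteq> (j2, k2) \<and> Rc F K j1 k1 = Some t \<and> Rc F K j2 k2 = Some t
        \<longrightarrow> Rc F K j1 k2 = None \<and> Rc F K j2 k1 = None"
    using Rc_cond6[OF F0] by blast
qed

lemma card_Sc:
  assumes F0: "0 < F"
  shows "card (Sc F K) = K * (F - 1) - Tf F K"
proof -
  have inj: "inj_on (\<lambda>(k, j). j + F * k) (SIGMA k:{..<K}. {k mod F<..<F})"
  proof (rule inj_onI)
    fix p q assume p: "p \<in> (SIGMA k:{..<K}. {k mod F<..<F})" and q: "q \<in> (SIGMA k:{..<K}. {k mod F<..<F})"
      and e: "(\<lambda>(k, j). j + F * k) p = (\<lambda>(k, j). j + F * k) q"
    obtain k j where pp: "p = (k, j)" by (cases p)
    obtain k' j' where qq: "q = (k', j')" by (cases q)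
    have "j < F" "j' < F" using p q pp qq by auto
    then show "p = q" using enc_inj[of j F j' k k'] e pp qq by simp
  qed
  have "card (Sc F K) = card (SIGMA k:{..<K}. {k mod F<..<F})"
    unfolding Sc_def using card_image[OF inj] .
  also have "\<dots> = (\<Sum>k<K. card {k mod F<..<F})" by (simp add: card_SigmaI)
  also have "\<dots> = (\<Sum>k<K. (F - 1) - k mod F)" by (rule sum.cong) auto
  also have "\<dots> = (\<Sum>k<K. F - 1) - (\<Sum>k<K. k mod F)"
    by (rule sum_subtractf_nat) (use F0 in \<open>auto simp: less_Suc_eq_le[symmetric]\<close>)
  also have "\<dots> = K * (F - 1) - Tf F K" by (simp add: Tf_def)
  finally show ?thesis .
qed


theorem mainTheorem12:
  fixes F K l i :: nat
  assumes "F \<ge> 2" and "K \<ge> 1" and "K = l * F + i" and "i < F"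
  shows "real (s_PDA F K 1) =
           real l * real F * (real F - 1) / 2 + real i * (real i - 1) / 2 + real i * (real F - real i)"
proof -
  have F0: "0 < F" using assms(1) by simp
  define m where "m = K * (F - 1) - Tf F K"
  have ex: "\<exists>(S::nat set) R. is_PDA S F K 1 R \<and> card S = m"
    using Rc_PDA[OF F0, of K] card_Sc[OF F0, of K] unfolding m_def by blast
  have lb: "\<And>(S::nat set) R. is_PDA S F K 1 R \<Longrightarrow> m \<le> card S"
    unfolding m_def using lower by blast
  have sm: "s_PDA F K 1 = m"
    unfolding s_PDA_def
  proof (rule Least_equality)
    show "\<exists>(S::nat set) R. is_PDA S F K 1 R \<and> card S = m" using ex .
    fix y assume "\<exists>(S::nat set) R. is_PDA S F K 1 R \<and> card S = y"
    then obtain S :: "nat set" and R where "is_PDA S F K 1 R" "card S = y" by blast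
    then show "m \<le> y" using lb by blast
  qed
  have Tle: "Tf F K \<le> K * (F - 1)"
  proof -
    have "Tf F K \<le> (\<Sum>k<K. F - 1)" unfolding Tf_def
      by (rule sum_mono) (use F0 in \<open>auto simp: less_Suc_eq_le[symmetric]\<close>)
    then show ?thesis by simp
  qed
  have dv: "K div F = l" "K mod F = i" using assms(3,4) by simp_all
  have T2: "2 * Tf F K = l * F * (F - 1) + i * (i - 1)" using Tf_formula[OF F0, of K] dv by simp
  have rT: "real (Tf F K) = (real l * real F * (real F - 1) + real i * (real i - 1)) / 2"
  proof -
    have h0: "2 * real (Tf F K) = real (l * F * (F - 1)) + real (i * (i - 1))"
      using arg_cong[OF T2, of real] by simp
    have h1: "real (l * F * (F - 1)) = real l * real F * (real F - 1)" using F0 by (simp add: of_nat_diff)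
    have h2: "real (i * (i - 1)) = real i * (real i - 1)" by (cases i) (auto simp: algebra_simps)
    have "2 * real (Tf F K) = real l * real F * (real F - 1) + real i * (real i - 1)"
      using h0 unfolding h1 h2 .
    then show ?thesis by simp
  qed
  have "real (s_PDA F K 1) = real (K * (F - 1)) - real (Tf F K)" using sm m_def Tle by (simp add: of_nat_diff)
  also have "\<dots> = real K * (real F - 1) - real (Tf F K)" using F0 by (simp add: of_nat_diff)
  also have "\<dots> = real l * real F * (real F - 1) / 2 + real i * (real i - 1) / 2 + real i * (real F - real i)"
  proof -
    have rK: "real K = real l * real F + real i" using assms(3) by simp
    show ?thesis unfolding rT rK by (simp add: field_simps)
  qed
  finally show ?thesis .
qed

end
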